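(* Let $\mathbb{K}=(K,+,0)$ be a positive commutative monoid. The following are equivalent: (1) $\mathbb{K}$ has the transportation property; (2) the inner consistency property holds for $\mathbb{K}$-relations; (3) every acyclic hypergraph has the local-to-global consistency property for $\mathbb{K}$-relations; (4) the hypergraph $P_3$ with vertices $A,B,C,D$ and hyperedges $\{A,B\},\{B,C\},\{C,D\}$ has the local-to-global consistency property for $\mathbb{K}$-relations.
   Context: A commutative monoid is positive if $p+q=0$ implies $p=q=0$; monoids have at least two elements. Attributes have domains; for a finite attribute set $X$, an $X$-tuple assigns each $A\in X$ a value in its domain; $t[Y]$ is restriction. A $\mathbb{K}$-relation over $X$ is a function $R$ from $X$-tuples to $K$ with finite support $R'=\{t:R(t)\ne0\}$; marginals $R[Y](t)=\sum_{r\in R',r[Y]=t}R(r)$. $R(X)$ and $S(Y)$ are consistent if some $\mathbb{K}$-relation $W$ over $X\cup Y$ has $W[X]=R$, $W[Y]=S$; they are inner consistent if $R[X\cap Y]=S[X\cap Y]$. The inner consistency property holds for $\mathbb{K}$-relations if any two inner consistent $\mathbb{K}$-relations are consistent. $\mathbb{K}$ has the transportation property if for all positive integers $m,n$ and all $b\in K^m$, $c\in K^n$ with $b_1+\dots+b_m=c_1+\dots+c_n$ there is $(d_{ij})\in K^{m\times n}$ with $\sum_j d_{ij}=b_i$ for all $i$ and $\sum_i d_{ij}=c_j$ for all $j$. A hypergraph with hyperedges $X_1,\dots,X_m$ has the local-to-global consistency property for $\mathbb{K}$-relations if every collection $R_1(X_1),\dots,R_m(X_m)$ that is pairwise consistent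 (every two are consistent) is globally consistent (some $W$ over $X_1\cup\dots\cup X_m$ has $W[X_i]=R_i$ for all $i$). A hypergraph is acyclic (Beeri–Fagin–Maier–Yannakakis) iff it has a join tree: a tree on its hyperedges such that for each vertex the hyperedges containing it form a connected subtree. *)

theory Defs
  imports Main
begin

text \<open>Attributes and domain values are modelled by natural numbers; a schema is given by
  a domain assignment Dom (attribute to set of admissible values).\<close>

type_synonym tuple = "nat \<Rightarrow> nat option"
type_synonym 'k krelation = "tuple \<Rightarrow> 'k"

definition is_tuple :: "(nat \<Rightarrow> nat set) \<Rightarrow> nat set \<Rightarrow> tuple \<Rightarrow> bool" where
  "is_tuple Dom X t \<longleftrightarrow> dom t = X \<and> (\<forall>A\<in>X. the (t A) \<in> Dom A)"

definition is_krel :: "(nat \<Rightarrow> nat set) \<Rightarrow> nat set \<Rightarrow> ('k::zero) krelation \<Rightarrow> bool" where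
  "is_krel Dom X R \<longleftrightarrow> (\<forall>t. R t \<noteq> 0 \<longrightarrow> is_tuple Dom X t) \<and> finite {t. R t \<noteq> 0}"

definition support :: "('k::zero) krelation \<Rightarrow> tuple set" where
  "support R = {t. R t \<noteq> 0}"

definition marg :: "('k::comm_monoid_add) krelation \<Rightarrow> nat set \<Rightarrow> 'k krelation" where
  "marg R Y t = (\<Sum>r\<in>{r\<in>support R. r |` Y = t}. R r)"

definition consistent ::
  "(nat \<Rightarrow> nat set) \<Rightarrow> ('k::comm_monoid_add) krelation \<Rightarrow> nat set \<Rightarrow> 'k krelation \<Rightarrow> nat set \<Rightarrow> bool" where
  "consistent Dom R X S Y \<longleftrightarrow>
     (\<exists>W. is_krel Dom (X \<union> Y) W \<and> marg W X = R \<and> marg W Y = S)"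

definition inner_consistent ::
  "('k::comm_monoid_add) krelation \<Rightarrow> nat set \<Rightarrow> 'k krelation \<Rightarrow> nat set \<Rightarrow> bool" where
  "inner_consistent R X S Y \<longleftrightarrow> marg R (X \<inter> Y) = marg S (X \<inter> Y)"

definition inner_consistency_property :: "('k::comm_monoid_add) itself \<Rightarrow> bool" where
  "inner_consistency_property (_::'k itself) \<longleftrightarrow>
     (\<forall>Dom X Y (R::'k krelation) S.
        finite X \<and> finite Y \<and> is_krel Dom X R \<and> is_krel Dom Y S \<and> inner_consistent R X S Y
        \<longrightarrow> consistent Dom R X S Y)"

definition transportation_property :: "('k::comm_monoid_add) itself \<Rightarrow> bool" where
  "transportation_property (_::'k itself) \<longleftrightarrow>
     (\<forall>(m::nat) (n::nat) (b::nat \<Rightarrow> 'k) (c::nat \<Rightarrow> 'k).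
        0 < m \<and> 0 < n \<and> (\<Sum>i<m. b i) = (\<Sum>j<n. c j) \<longrightarrow>
        (\<exists>d::nat \<Rightarrow> nat \<Rightarrow> 'k.
           (\<forall>i<m. (\<Sum>j<n. d i j) = b i) \<and> (\<forall>j<n. (\<Sum>i<m. d i j) = c j)))"

definition hypergraph :: "nat \<Rightarrow> (nat \<Rightarrow> nat set) \<Rightarrow> bool" where
  "hypergraph m X \<longleftrightarrow> (\<forall>i<m. finite (X i)) \<and> inj_on X {..<m}"

definition local_to_global :: "('k::comm_monoid_add) itself \<Rightarrow> nat \<Rightarrow> (nat \<Rightarrow> nat set) \<Rightarrow> bool" where
  "local_to_global (_::'k itself) m X \<longleftrightarrow>
     (\<forall>Dom (R::nat \<Rightarrow> 'k krelation).
        (\<forall>i<m. is_krel Dom (X i) (R i)) \<and>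
        (\<forall>i<m. \<forall>j<m. consistent Dom (R i) (X i) (R j) (X j)) \<longrightarrow>
        (\<exists>W. is_krel Dom (\<Union>i<m. X i) W \<and> (\<forall>i<m. marg W (X i) = R i)))"

definition connected_on :: "'a set \<Rightarrow> ('a \<times> 'a) set \<Rightarrow> bool" where
  "connected_on V E \<longleftrightarrow> (\<forall>u\<in>V. \<forall>v\<in>V. (u, v) \<in> (E \<inter> (V \<times> V))\<^sup>*)"

definition is_tree :: "'a set \<Rightarrow> ('a \<times> 'a) set \<Rightarrow> bool" where
  "is_tree V E \<longleftrightarrow> V \<noteq> {} \<and> E \<subseteq> V \<times> V \<and> sym E \<and> (\<forall>v. (v, v) \<notin> E) \<and>
     connected_on V E \<and>
     (\<forall>u v. (u, v) \<in> E \<longrightarrow> (u, v) \<notin> (E - {(u, v), (v, u)})\<^sup>*)"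

definition join_tree :: "nat \<Rightarrow> (nat \<Rightarrow> nat set) \<Rightarrow> (nat \<times> nat) set \<Rightarrow> bool" where
  "join_tree m X E \<longleftrightarrow> is_tree {..<m} E \<and> (\<forall>v. connected_on {i. i < m \<and> v \<in> X i} E)"

definition acyclic_hypergraph :: "nat \<Rightarrow> (nat \<Rightarrow> nat set) \<Rightarrow> bool" where
  "acyclic_hypergraph m X \<longleftrightarrow> (\<exists>E. join_tree m X E)"

text \<open>P_3 with A,B,C,D = 0,1,2,3 and hyperedges {A,B},{B,C},{C,D}.\<close>
definition P3 :: "nat \<Rightarrow> nat set" where
  "P3 i = {i, Suc i}"

end

theory Submission
  imports Defs
begin

definition mk :: "'i set \<Rightarrow> ('i \<Rightarrow> tuple) \<Rightarrow> ('i \<Rightarrow> 'k::comm_monoid_add) \<Rightarrow> 'k krelation" where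
  "mk I f g t = sum g {i\<in>I. f i = t}"

lemma marg_as_mk: "marg R Y = mk (support R) (\<lambda>r. r |` Y) R"
  by (simp add: fun_eq_iff marg_def mk_def)

lemma support_mk: "support (mk I f g) \<subseteq> f ` I"
proof
  fix t assume "t \<in> support (mk I f g)"
  then have "sum g {i\<in>I. f i = t} \<noteq> 0" by (simp add: support_def mk_def)
  then have "{i\<in>I. f i = t} \<noteq> {}" by (metis sum.empty)
  then show "t \<in> f ` I" by blast
qed

lemma marg_mk:
  assumes "finite I"
  shows "marg (mk I f g) Y = mk I (\<lambda>i. f i |` Y) g"
proof
  fix t
  let ?R = "mk I f g"
  have "marg ?R Y t = sum ?R {r\<in>support ?R. r |` Y = t}" by (simp add: marg_def)
  also have "\<dots> = sum ?R {r\<in>f ` I. r |` Y = t}"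
    apply (rule sum.mono_neutral_left)
    using assms support_mk[of I f g] by (auto simp: support_def)
  also have "\<dots> = (\<Sum>r\<in>{r\<in>f ` I. r |` Y = t}. sum g {i\<in>{i\<in>I. f i |` Y = t}. f i = r})"
    apply (rule sum.cong[OF refl])
    unfolding mk_def by (rule sum.cong) auto
  also have "\<dots> = sum g {i\<in>I. f i |` Y = t}"
    apply (rule sum.group) using assms by auto
  finally show "marg ?R Y t = mk I (\<lambda>i. f i |` Y) g t" by (simp add: mk_def)
qed

lemma mk_cong: "(\<And>i. i \<in> I \<Longrightarrow> f i = f' i) \<Longrightarrow> (\<And>i. i \<in> I \<Longrightarrow> g i = g' i) \<Longrightarrow> mk I f g = mk I f' g'"
  unfolding mk_def fun_eq_iff by (intro allI sum.cong) auto

lemma finite_support: "is_krel Dom X R \<Longrightarrow> finite (support R)"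
  by (simp add: is_krel_def support_def)

lemma marg_marg:
  assumes "finite (support W)"
  shows "marg (marg W X) Z = marg W (X \<inter> Z)"
  unfolding marg_as_mk[of W] marg_mk[OF assms] by (simp add: restrict_restrict)

lemma mk_support_id: "finite (support R) \<Longrightarrow> mk (support R) (\<lambda>r. r) R = R"
proof
  fix t assume "finite (support R)"
  show "mk (support R) (\<lambda>r. r) R t = R t"
  proof (cases "t \<in> support R")
    case True
    then have "{i \<in> support R. i = t} = {t}" by auto
    then show ?thesis by (simp add: mk_def)
  next
    case False
    then have "{i \<in> support R. i = t} = {}" by auto
    then show ?thesis using False by (simp add: mk_def support_def)
  qed
qed

lemma tuple_restrict_self: "is_tuple Dom X t \<Longrightarrow> t |` X = t"
  unfolding is_tuple_def restrict_map_def fun_eq_iff by (auto simp: domIff)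

lemma marg_self:
  assumes "is_krel Dom X R"
  shows "marg R X = R"
proof -
  have "marg R X = mk (support R) (\<lambda>r. r) R"
    unfolding marg_as_mk
    apply (rule mk_cong)
    using assms tuple_restrict_self by (auto simp: is_krel_def support_def)
  then show ?thesis using mk_support_id[OF finite_support[OF assms]] by simp
qed

lemma is_krel_mk:
  assumes "finite I" "\<And>i. i \<in> I \<Longrightarrow> is_tuple Dom X (f i)"
  shows "is_krel Dom X (mk I f g)"
proof -
  have "support (mk I f g) \<subseteq> f ` I" by (rule support_mk)
  then show ?thesis unfolding is_krel_def using assms
    by (auto simp: support_def intro: finite_subset)
qed

lemma consistent_sym: "consistent Dom R X S Y \<Longrightarrow> consistent Dom S Y R X"
proof -
  assume "consistent Dom R X S Y"
  then obtain W where "is_krel Dom (X \<union> Y) W" "marg W X = R" "marg W Y = S"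
    unfolding consistent_def by blast
  then show ?thesis unfolding consistent_def by (intro exI[of _ W]) (simp add: Un_commute)
qed

lemma consistent_self: "is_krel Dom X R \<Longrightarrow> consistent Dom R X R X"
  unfolding consistent_def by (rule exI[of _ R]) (simp add: marg_self)

lemma consistent_inner:
  assumes "consistent Dom R X S Y" "Z \<subseteq> X" "Z \<subseteq> Y"
  shows "marg R Z = marg S Z"
proof -
  obtain W where W: "is_krel Dom (X \<union> Y) W" "marg W X = R" "marg W Y = S"
    using assms(1) unfolding consistent_def by blast
  have f: "finite (support W)" using finite_support[OF W(1)] .
  have "marg R Z = marg W (X \<inter> Z)" using marg_marg[OF f, of X Z] W(2) by simp
  also have "\<dots> = marg W (Y \<inter> Z)" using assms by (simp add: Int_absorb1)
  also have "\<dots> = marg S Z" using marg_marg[OF f, of Y Z] W(3) by simp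
  finally show ?thesis .
qed

lemma sum_zero_pos:
  assumes pos: "\<forall>p q :: 'k::comm_monoid_add. p + q = 0 \<longrightarrow> p = 0 \<and> q = 0"
  shows "finite S \<Longrightarrow> sum (f :: _ \<Rightarrow> 'k) S = 0 \<Longrightarrow> x \<in> S \<Longrightarrow> f x = 0"
proof (induction S rule: finite_induct)
  case empty then show ?case by simp
next
  case (insert a F)
  then have "f a + sum f F = 0" by simp
  then have "f a = 0" "sum f F = 0" using pos by blast+
  then show ?case using insert.IH insert.prems by (cases "x = a") simp_all
qed


fun wk :: "('a \<times> 'a) set \<Rightarrow> 'a \<Rightarrow> 'a \<Rightarrow> nat \<Rightarrow> 'a" where
  "wk E a c 0 = a"
| "wk E a c (Suc 0) = c"
| "wk E a c (Suc (Suc n)) = (SOME w. (wk E a c (Suc n), w) \<in> E \<and> w \<noteq> wk E a c n)"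

lemma leaf_exists:
  assumes fin: "finite I" and sub: "E \<subseteq> I \<times> I" and sy: "sym E"
    and conn: "connected_on I E"
    and br: "\<forall>u v. (u, v) \<in> E \<longrightarrow> (u, v) \<notin> (E - {(u, v), (v, u)})\<^sup>*"
    and two: "a \<in> I" "b \<in> I" "a \<noteq> b"
  shows "\<exists>l\<in>I. \<exists>p. (l, p) \<in> E \<and> (\<forall>q. (l, q) \<in> E \<longrightarrow> q = p)"
proof (rule ccontr)
  assume nl: "\<not> ?thesis"
  have nl': "\<exists>q. (l, q) \<in> E \<and> q \<noteq> p" if "(l, p) \<in> E" for l p
    using nl sub that by blast
  from conn two have "(a, b) \<in> (E \<inter> I \<times> I)\<^sup>*" unfolding connected_on_def by blast
  then obtain c where ac: "(a, c) \<in> E" using two(3)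
    by (metis IntD1 converse_rtranclE)
  define f where "f = wk E a c"
  have e: "(f n, f (Suc n)) \<in> E" for n
  proof (induction n)
    case 0 then show ?case using ac by (simp add: f_def)
  next
    case (Suc n)
    then have "(f (Suc n), f n) \<in> E" using sy by (meson symD)
    then have "\<exists>w. (f (Suc n), w) \<in> E \<and> w \<noteq> f n" using nl' by blast
    then have "(f (Suc n), f (Suc (Suc n))) \<in> E \<and> f (Suc (Suc n)) \<noteq> f n"
      unfolding f_def wk.simps by (rule someI_ex)
    then show ?case by blast
  qed
  have nb: "f (Suc (Suc n)) \<noteq> f n" for n
  proof -
    have "(f (Suc n), f n) \<in> E" using e[of n] sy by (meson symD)
    then have "\<exists>w. (f (Suc n), w) \<in> E \<and> w \<noteq> f n" using nl' by blast
    then have "(f (Suc n), f (Suc (Suc n))) \<in> E \<and> f (Suc (Suc n)) \<noteq> f n"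
      unfolding f_def wk.simps by (rule someI_ex)
    then show ?thesis by blast
  qed
  have inI: "f n \<in> I" for n using e[of n] sub by blast
  have "\<not> inj_on f {..card I}"
  proof
    assume "inj_on f {..card I}"
    then have "card {..card I} \<le> card I" using card_inj_on_le[of f "{..card I}" I] inI fin by blast
    then show False by simp
  qed
  then obtain i j where ij: "i \<noteq> j" "f i = f j" unfolding inj_on_def by blast
  define P where "P j = (\<exists>i<j. f i = f j)" for j
  have "\<exists>j. P j" unfolding P_def
  proof (cases "i < j")
    case True then show "\<exists>j. \<exists>i<j. f i = f j" using ij by blast
  next
    case False then have "j < i" using ij by simp
    then show "\<exists>j. \<exists>i<j. f i = f j" using ij by metis
  qed
  then obtain j0 where j0: "P j0" "\<And>k. k < j0 \<Longrightarrow> \<not> P k" by (metis exists_least_iff)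
  then obtain i0 where i0: "i0 < j0" "f i0 = f j0" unfolding P_def by blast
  have dist: "f x \<noteq> f y" if "x < y" "y < j0" for x y
    using j0(2)[OF that(2)] that(1) unfolding P_def by blast
  define D where "D = {(f i0, f (Suc i0)), (f (Suc i0), f i0)}"
  have path: "Suc i0 \<le> k \<Longrightarrow> k \<le> j0 \<Longrightarrow> (f (Suc i0), f k) \<in> (E - D)\<^sup>*" for k
  proof (induction k)
    case 0 then show ?case by simp
  next
    case (Suc k)
    show ?case
    proof (cases "Suc k = Suc i0")
      case True then show ?thesis by simp
    next
      case False
      then have k: "Suc i0 \<le> k" "k < j0" using Suc.prems by auto
      then have IH: "(f (Suc i0), f k) \<in> (E - D)\<^sup>*" using Suc.IH by simp
      have n1: "(f k, f (Suc k)) \<noteq> (f i0, f (Suc i0))"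
        using dist[of i0 k] k by auto
      have n2: "(f k, f (Suc k)) \<noteq> (f (Suc i0), f i0)"
      proof
        assume h: "(f k, f (Suc k)) = (f (Suc i0), f i0)"
        show False
        proof (cases "k = Suc i0")
          case True then show False using h nb[of i0] by simp
        next
          case False then show False using h dist[of "Suc i0" k] k by auto
        qed
      qed
      have "(f k, f (Suc k)) \<in> E - D" using e[of k] n1 n2 unfolding D_def by blast
      with IH show ?thesis by (rule rtrancl_into_rtrancl)
    qed
  qed
  have "(f (Suc i0), f i0) \<in> (E - D)\<^sup>*" using path[of j0] i0 by simp
  moreover have "sym ((E - D)\<^sup>*)"
    apply (rule sym_rtrancl)
    using sy unfolding sym_def D_def by blast
  ultimately have "(f i0, f (Suc i0)) \<in> (E - D)\<^sup>*" by (meson symD)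
  then show False using br e[of i0] unfolding D_def by blast
qed

lemma conn_remove:
  assumes sy: "sym E" and irr: "\<forall>v. (v, v) \<notin> E" and leaf: "\<forall>q. (l, q) \<in> E \<longrightarrow> q = p"
    and conn: "connected_on S E"
  shows "connected_on (S - {l}) E"
proof -
  let ?S' = "S - {l}"
  have key: "(u, x) \<in> (E \<inter> S \<times> S)\<^sup>* \<Longrightarrow> u \<noteq> l \<Longrightarrow>
     (x \<noteq> l \<longrightarrow> (u, x) \<in> (E \<inter> ?S' \<times> ?S')\<^sup>*) \<and> (x = l \<longrightarrow> (u, p) \<in> (E \<inter> ?S' \<times> ?S')\<^sup>*)" for u x
  proof (induction rule: rtrancl_induct)
    case base then show ?case by simp
  next
    case (step w x)
    show ?case
    proof (cases "w = l")
      case True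
      then have "x \<noteq> l" using step(2) irr by blast
      moreover have "x = p" using leaf step(2) True by blast
      ultimately show ?thesis using step True by simp
    next
      case False
      note wl = False
      show ?thesis
      proof (cases "x = l")
        case True
        then have "(l, w) \<in> E" using step(2) sy by (meson IntD1 symD)
        then have "w = p" using leaf by blast
        then show ?thesis using step wl True by simp
      next
        case False
        then have "(w, x) \<in> E \<inter> ?S' \<times> ?S'" using step(2) wl by blast
        then show ?thesis using step wl False by (meson rtrancl_into_rtrancl)
      qed
    qed
  qed
  show ?thesis unfolding connected_on_def
  proof (intro ballI)
    fix u v assume "u \<in> ?S'" "v \<in> ?S'"
    then have "(u, v) \<in> (E \<inter> S \<times> S)\<^sup>*" "u \<noteq> l" "v \<noteq> l" using conn unfolding connected_on_def by auto
    then show "(u, v) \<in> (E \<inter> ?S' \<times> ?S')\<^sup>*" using key by blast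
  qed
qed

lemma connected_on_restrict:
  assumes "S \<subseteq> T" shows "connected_on S (E \<inter> T \<times> T) = connected_on S E"
proof -
  have "E \<inter> T \<times> T \<inter> S \<times> S = E \<inter> S \<times> S" using assms by blast
  then show ?thesis unfolding connected_on_def by simp
qed


lemma glue:
  assumes ICP: "inner_consistency_property TYPE('k::comm_monoid_add)"
  shows "finite I \<Longrightarrow> I \<noteq> {} \<Longrightarrow> E \<subseteq> I \<times> I \<Longrightarrow> sym E \<Longrightarrow> (\<forall>v. (v, v) \<notin> E) \<Longrightarrow>
    connected_on I E \<Longrightarrow> (\<forall>u v. (u, v) \<in> E \<longrightarrow> (u, v) \<notin> (E - {(u, v), (v, u)})\<^sup>*) \<Longrightarrow>
    (\<forall>v. connected_on {i\<in>I. v \<in> X i} E) \<Longrightarrow>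
    (\<forall>i\<in>I. finite (X i) \<and> is_krel Dom (X i) ((R :: nat \<Rightarrow> 'k krelation) i)) \<Longrightarrow>
    (\<forall>i\<in>I. \<forall>j\<in>I. consistent Dom (R i) (X i) (R j) (X j)) \<Longrightarrow>
    \<exists>W. is_krel Dom (\<Union>i\<in>I. X i) W \<and> (\<forall>i\<in>I. marg W (X i) = R i)"
proof (induction "card I" arbitrary: I E rule: less_induct)
  case less
  note fin = less.prems(1) and ne = less.prems(2) and sub = less.prems(3) and sy = less.prems(4)
    and irr = less.prems(5) and conn = less.prems(6) and br = less.prems(7) and run = less.prems(8)
    and kr = less.prems(9) and cons = less.prems(10)
  obtain a where a: "a \<in> I" using ne by blast
  show ?case
  proof (cases "I = {a}")
    case True
    then show ?thesis using kr marg_self by auto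
  next
    case False
    then obtain b where b: "b \<in> I" "a \<noteq> b" using a by blast
    obtain l p where lp: "l \<in> I" "(l, p) \<in> E" "\<forall>q. (l, q) \<in> E \<longrightarrow> q = p"
      using leaf_exists[OF fin sub sy conn br a b(1) b(2)] by blast
    have p: "p \<in> I" "p \<noteq> l" using lp sub irr by blast+
    define I' where "I' = I - {l}"
    define E' where "E' = E \<inter> I' \<times> I'"
    have cardI': "card I' < card I" unfolding I'_def using fin lp(1) by (meson card_Diff1_less)
    have finI': "finite I'" using fin unfolding I'_def by simp
    have neI': "I' \<noteq> {}" using p unfolding I'_def by blast
    have subE': "E' \<subseteq> I' \<times> I'" unfolding E'_def by blast
    have syE': "sym E'" using sy unfolding E'_def sym_def by blast
    have irrE': "\<forall>v. (v, v) \<notin> E'" using irr unfolding E'_def by blast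
    have connE': "connected_on I' E'"
      unfolding E'_def connected_on_restrict[OF order_refl] I'_def
      by (rule conn_remove[OF sy irr lp(3) conn])
    have brE': "\<forall>u v. (u, v) \<in> E' \<longrightarrow> (u, v) \<notin> (E' - {(u, v), (v, u)})\<^sup>*"
    proof (intro allI impI)
      fix u v assume "(u, v) \<in> E'"
      then have "(u, v) \<notin> (E - {(u, v), (v, u)})\<^sup>*" using br unfolding E'_def by blast
      moreover have "(E' - {(u, v), (v, u)})\<^sup>* \<subseteq> (E - {(u, v), (v, u)})\<^sup>*"
        by (rule rtrancl_mono) (auto simp: E'_def)
      ultimately show "(u, v) \<notin> (E' - {(u, v), (v, u)})\<^sup>*" by blast
    qed
    have runE': "\<forall>v. connected_on {i\<in>I'. v \<in> X i} E'"
    proof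
      fix v
      have eq: "{i\<in>I'. v \<in> X i} = {i\<in>I. v \<in> X i} - {l}" unfolding I'_def by blast
      have "connected_on ({i\<in>I. v \<in> X i} - {l}) E"
        by (rule conn_remove[OF sy irr lp(3)]) (use run in blast)
      then show "connected_on {i\<in>I'. v \<in> X i} E'"
        unfolding E'_def eq by (subst connected_on_restrict) (auto simp: I'_def)
    qed
    have krI': "\<forall>i\<in>I'. finite (X i) \<and> is_krel Dom (X i) (R i)" using kr unfolding I'_def by blast
    have consI': "\<forall>i\<in>I'. \<forall>j\<in>I'. consistent Dom (R i) (X i) (R j) (X j)" using cons unfolding I'_def by blast
    obtain W' where W': "is_krel Dom (\<Union>i\<in>I'. X i) W'" "\<forall>i\<in>I'. marg W' (X i) = R i"
      using less.hyps[OF cardI' finI' neI' subE' syE' irrE' connE' brE' runE' krI' consI'] by blast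
    define U' where "U' = (\<Union>i\<in>I'. X i)"
    define Z where "Z = U' \<inter> X l"
    have pI': "p \<in> I'" using p unfolding I'_def by blast
    have ZXp: "Z \<subseteq> X p"
    proof
      fix v assume "v \<in> Z"
      then obtain i where i: "i \<in> I'" "v \<in> X i" "v \<in> X l" unfolding Z_def U'_def by blast
      let ?S = "{j\<in>I. v \<in> X j}"
      have "(l, i) \<in> (E \<inter> ?S \<times> ?S)\<^sup>*" using run i lp(1) unfolding connected_on_def I'_def by blast
      moreover have "l \<noteq> i" using i unfolding I'_def by blast
      ultimately obtain w where "(l, w) \<in> E \<inter> ?S \<times> ?S" by (metis converse_rtranclE)
      then have "w = p" "w \<in> ?S" using lp(3) by blast+
      then show "v \<in> X p" by blast
    qed
    have finW': "finite (support W')" using finite_support[OF W'(1)] .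
    have "marg W' Z = marg W' (X p \<inter> Z)" using ZXp by (simp add: Int_absorb1)
    also have "\<dots> = marg (marg W' (X p)) Z" using marg_marg[OF finW'] by simp
    also have "\<dots> = marg (R p) Z"
    proof -
      have "marg W' (X p) = R p" using W'(2) pI' by blast
      then show ?thesis by simp
    qed
    also have "\<dots> = marg (R l) Z"
    proof -
      have c: "consistent Dom (R p) (X p) (R l) (X l)" using cons p(1) lp(1) by blast
      show ?thesis by (rule consistent_inner[OF c ZXp]) (simp add: Z_def)
    qed
    finally have ic: "inner_consistent W' U' (R l) (X l)" unfolding inner_consistent_def Z_def U'_def .
    have finU': "finite U'" unfolding U'_def using finI' krI' by blast
    obtain W where W: "is_krel Dom (U' \<union> X l) W" "marg W U' = W'" "marg W (X l) = R l"
      using ICP finU' kr lp(1) W'(1) ic unfolding inner_consistency_property_def consistent_def U'_def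
      by blast
    have finW: "finite (support W)" using finite_support[OF W(1)] .
    have U: "(\<Union>i\<in>I. X i) = U' \<union> X l" unfolding U'_def I'_def using lp(1) by blast
    show ?thesis
    proof (intro exI conjI)
      show "is_krel Dom (\<Union>i\<in>I. X i) W" using W(1) U by simp
      show "\<forall>i\<in>I. marg W (X i) = R i"
      proof
        fix i assume i: "i \<in> I"
        show "marg W (X i) = R i"
        proof (cases "i = l")
          case True then show ?thesis using W(3) by simp
        next
          case False
          then have iI': "i \<in> I'" using i unfolding I'_def by blast
          then have "X i \<subseteq> U'" unfolding U'_def by blast
          then have "marg W (X i) = marg W (U' \<inter> X i)" by (simp add: Int_absorb1)
          also have "\<dots> = marg (marg W U') (X i)" using marg_marg[OF finW] by simp
          also have "\<dots> = R i" using W(2) W'(2) iI' by simp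
          finally show ?thesis .
        qed
      qed
    qed
  qed
qed


lemma add_restrict1:
  assumes "is_tuple Dom X r" "is_tuple Dom Y s" "r |` (X \<inter> Y) = s |` (X \<inter> Y)"
  shows "(r ++ s) |` X = r"
proof
  fix x
  have dr: "dom r = X" and ds: "dom s = Y" using assms unfolding is_tuple_def by auto
  show "((r ++ s) |` X) x = r x"
  proof (cases "x \<in> X")
    case True
    show ?thesis
    proof (cases "x \<in> Y")
      case True
      then have "s x = r x" using assms(3) \<open>x \<in> X\<close>
        by (metis IntI restrict_in)
      then show ?thesis using \<open>x \<in> X\<close> by (simp add: map_add_def split: option.split)
    next
      case False
      then have "s x = None" using ds by blast
      then show ?thesis using \<open>x \<in> X\<close> by (simp add: map_add_def)
    qed
  next
    case False
    then show ?thesis using dr by auto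
  qed
qed

lemma add_restrict2:
  assumes "is_tuple Dom Y s"
  shows "(r ++ s) |` Y = s"
proof
  fix x
  have ds: "dom s = Y" using assms unfolding is_tuple_def by auto
  show "((r ++ s) |` Y) x = s x"
  proof (cases "x \<in> Y")
    case True
    then obtain y where "s x = Some y" using ds by blast
    then show ?thesis using True by simp
  next
    case False then show ?thesis using ds by auto
  qed
qed

lemma add_tuple:
  assumes "is_tuple Dom X r" "is_tuple Dom Y s"
  shows "is_tuple Dom (X \<union> Y) (r ++ s)"
proof -
  have dr: "dom r = X" and ds: "dom s = Y" using assms unfolding is_tuple_def by auto
  have "dom (r ++ s) = X \<union> Y" using dr ds by auto
  moreover have "the ((r ++ s) A) \<in> Dom A" if "A \<in> X \<union> Y" for A
  proof (cases "A \<in> Y")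
    case True
    then obtain y where "s A = Some y" using ds by blast
    then show ?thesis using assms(2) True unfolding is_tuple_def by (metis map_add_Some_iff)
  next
    case False
    then have "s A = None" using ds by blast
    then show ?thesis using assms(1) that False unfolding is_tuple_def by (simp add: map_add_def)
  qed
  ultimately show ?thesis unfolding is_tuple_def by blast
qed

lemma transport_sets:
  assumes TP: "transportation_property TYPE('k::comm_monoid_add)"
    and pos: "\<forall>p q :: 'k. p + q = 0 \<longrightarrow> p = 0 \<and> q = 0"
    and fA: "finite A" and fB: "finite B" and nzA: "\<forall>a\<in>A. b a \<noteq> 0" and nzB: "\<forall>x\<in>B. c x \<noteq> 0"
    and eq: "sum b A = sum (c :: _ \<Rightarrow> 'k) B"
  shows "\<exists>d. (\<forall>a\<in>A. sum (d a) B = b a) \<and> (\<forall>x\<in>B. (\<Sum>a\<in>A. d a x) = c x)"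
proof (cases "A = {} \<or> B = {}")
  case True
  then have "A = {} \<and> B = {}"
  proof
    assume "A = {}"
    then have "sum c B = 0" using eq by simp
    then have "B = {}" using sum_zero_pos[OF pos fB] nzB by blast
    then show ?thesis using \<open>A = {}\<close> by simp
  next
    assume "B = {}"
    then have "sum b A = 0" using eq by simp
    then have "A = {}" using sum_zero_pos[OF pos fA] nzA by blast
    then show ?thesis using \<open>B = {}\<close> by simp
  qed
  then show ?thesis by simp
next
  case False
  define m where "m = card A"
  define n where "n = card B"
  have m0: "0 < m" and n0: "0 < n" using False fA fB unfolding m_def n_def by auto
  obtain h1 where h1: "bij_betw h1 {..<m} A"
    using ex_bij_betw_nat_finite[OF fA] unfolding m_def atLeast0LessThan by blast
  obtain h2 where h2: "bij_betw h2 {..<n} B"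
    using ex_bij_betw_nat_finite[OF fB] unfolding n_def atLeast0LessThan by blast
  have s1: "(\<Sum>i<m. b (h1 i)) = sum b A" using sum.reindex_bij_betw[OF h1] .
  have s2: "(\<Sum>j<n. c (h2 j)) = sum c B" using sum.reindex_bij_betw[OF h2] .
  obtain d' where d': "\<forall>i<m. (\<Sum>j<n. d' i j) = b (h1 i)" "\<forall>j<n. (\<Sum>i<m. d' i j) = c (h2 j)"
  proof -
    have "(\<Sum>i<m. b (h1 i)) = (\<Sum>j<n. c (h2 j))" using s1 s2 eq by simp
    then show ?thesis
      using TP[unfolded transportation_property_def, rule_format, of m n "\<lambda>i. b (h1 i)" "\<lambda>j. c (h2 j)"] m0 n0
      using that by blast
  qed
  define g1 where "g1 = inv_into {..<m} h1"
  define g2 where "g2 = inv_into {..<n} h2"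
  have g1: "\<And>a. a \<in> A \<Longrightarrow> g1 a < m \<and> h1 (g1 a) = a"
    using h1 unfolding g1_def bij_betw_def by (metis f_inv_into_f inv_into_into lessThan_iff)
  have g2: "\<And>x. x \<in> B \<Longrightarrow> g2 x < n \<and> h2 (g2 x) = x"
    using h2 unfolding g2_def bij_betw_def by (metis f_inv_into_f inv_into_into lessThan_iff)
  have g1h: "\<And>i. i < m \<Longrightarrow> g1 (h1 i) = i"
    using h1 unfolding g1_def bij_betw_def by (simp add: inv_into_f_f)
  have g2h: "\<And>j. j < n \<Longrightarrow> g2 (h2 j) = j"
    using h2 unfolding g2_def bij_betw_def by (simp add: inv_into_f_f)
  define d where "d a x = d' (g1 a) (g2 x)" for a x
  show ?thesis
  proof (intro exI conjI ballI)
    fix a assume a: "a \<in> A"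
    have "sum (d a) B = (\<Sum>j<n. d a (h2 j))" using sum.reindex_bij_betw[OF h2, of "d a"] by simp
    also have "\<dots> = (\<Sum>j<n. d' (g1 a) j)" unfolding d_def by (rule sum.cong) (auto simp: g2h)
    also have "\<dots> = b a" using d'(1) g1[OF a] by metis
    finally show "sum (d a) B = b a" .
  next
    fix x assume x: "x \<in> B"
    have "(\<Sum>a\<in>A. d a x) = (\<Sum>i<m. d (h1 i) x)" using sum.reindex_bij_betw[OF h1, of "\<lambda>a. d a x"] by simp
    also have "\<dots> = (\<Sum>i<m. d' i (g2 x))" unfolding d_def by (rule sum.cong) (auto simp: g1h)
    also have "\<dots> = c x" using d'(2) g2[OF x] by metis
    finally show "(\<Sum>a\<in>A. d a x) = c x" .
  qed
qed


lemma tp_icp: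
  assumes TP: "transportation_property TYPE('k::comm_monoid_add)"
    and pos: "\<forall>p q :: 'k. p + q = 0 \<longrightarrow> p = 0 \<and> q = 0"
  shows "inner_consistency_property TYPE('k)"
  unfolding inner_consistency_property_def
proof (intro allI impI)
  fix Dom X Y and R S :: "'k krelation"
  assume h: "finite X \<and> finite Y \<and> is_krel Dom X R \<and> is_krel Dom Y S \<and> inner_consistent R X S Y"
  then have kR: "is_krel Dom X R" and kS: "is_krel Dom Y S" and ic: "marg R (X \<inter> Y) = marg S (X \<inter> Y)"
    unfolding inner_consistent_def by auto
  define Z where "Z = X \<inter> Y"
  define A where "A z = {r \<in> support R. r |` Z = z}" for z
  define B where "B z = {s \<in> support S. s |` Z = z}" for z
  have fR: "finite (support R)" and fS: "finite (support S)" using kR kS finite_support by blast+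
  have ex: "\<exists>dz. (\<forall>a\<in>A z. sum (dz a) (B z) = R a) \<and> (\<forall>x\<in>B z. (\<Sum>a\<in>A z. dz a x) = S x)" for z
  proof (rule transport_sets[OF TP pos])
    show "finite (A z)" "finite (B z)" using fR fS unfolding A_def B_def by auto
    show "\<forall>a\<in>A z. R a \<noteq> 0" "\<forall>x\<in>B z. S x \<noteq> 0" unfolding A_def B_def support_def by auto
    have "marg R Z z = marg S Z z" using ic unfolding Z_def by simp
    then show "sum R (A z) = sum S (B z)" unfolding A_def B_def marg_def .
  qed
  then obtain d where d: "\<And>z. (\<forall>a\<in>A z. sum (d z a) (B z) = R a) \<and> (\<forall>x\<in>B z. (\<Sum>a\<in>A z. d z a x) = S x)"
    by metis
  define G where "G = {(r, s). r \<in> support R \<and> s \<in> support S \<and> r |` Z = s |` Z}"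
  have fG: "finite G"
    by (rule finite_subset[of _ "support R \<times> support S"]) (use fR fS in \<open>auto simp: G_def\<close>)
  have tR: "is_tuple Dom X r" if "r \<in> support R" for r using kR that unfolding is_krel_def support_def by auto
  have tS: "is_tuple Dom Y s" if "s \<in> support S" for s using kS that unfolding is_krel_def support_def by auto
  define g where "g = (\<lambda>(r, s). d (r |` Z) r s)"
  define W where "W = mk G (\<lambda>(r, s). r ++ s) g"
  have kW: "is_krel Dom (X \<union> Y) W"
    unfolding W_def by (rule is_krel_mk[OF fG]) (auto simp: G_def intro!: add_tuple tR tS)
  have mX: "marg W X = mk G fst g"
    unfolding W_def marg_mk[OF fG]
    by (rule mk_cong) (auto simp: G_def Z_def intro!: add_restrict1 tR tS)
  have mY: "marg W Y = mk G snd g"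
    unfolding W_def marg_mk[OF fG]
    by (rule mk_cong) (auto simp: G_def intro!: add_restrict2 tS)
  have eX: "mk G fst g = R"
  proof
    fix t
    show "mk G fst g t = R t"
    proof (cases "t \<in> support R")
      case True
      have set: "{i \<in> G. fst i = t} = Pair t ` B (t |` Z)"
        using True unfolding G_def B_def by auto
      have "mk G fst g t = sum g (Pair t ` B (t |` Z))" unfolding mk_def set ..
      also have "\<dots> = (\<Sum>s\<in>B (t |` Z). d (t |` Z) t s)"
        by (subst sum.reindex) (auto simp: inj_on_def g_def)
      also have "\<dots> = R t" using d[of "t |` Z"] True unfolding A_def by auto
      finally show ?thesis .
    next
      case False
      then have e: "{i \<in> G. fst i = t} = {}" unfolding G_def by auto
      have "mk G fst g t = 0" unfolding mk_def e by simp
      then show ?thesis using False unfolding support_def by simp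
    qed
  qed
  have eY: "mk G snd g = S"
  proof
    fix t
    show "mk G snd g t = S t"
    proof (cases "t \<in> support S")
      case True
      have set: "{i \<in> G. snd i = t} = (\<lambda>r. (r, t)) ` A (t |` Z)"
        using True unfolding G_def A_def by auto
      have "mk G snd g t = sum g ((\<lambda>r. (r, t)) ` A (t |` Z))" unfolding mk_def set ..
      also have "\<dots> = (\<Sum>r\<in>A (t |` Z). g (r, t))"
        by (subst sum.reindex) (auto simp: inj_on_def)
      also have "\<dots> = (\<Sum>r\<in>A (t |` Z). d (t |` Z) r t)"
        by (rule sum.cong) (auto simp: g_def A_def)
      also have "\<dots> = S t" using d[of "t |` Z"] True unfolding B_def by auto
      finally show ?thesis .
    next
      case False
      then have e: "{i \<in> G. snd i = t} = {}" unfolding G_def by auto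
      have "mk G snd g t = 0" unfolding mk_def e by simp
      then show ?thesis using False unfolding support_def by simp
    qed
  qed
  show "consistent Dom R X S Y"
    unfolding consistent_def using kW mX mY eX eY by blast
qed


definition E3 :: "(nat \<times> nat) set" where "E3 = {(0,1),(1,0),(1,2),(2,1)}"

lemma reach_closed:
  assumes "(x, y) \<in> R\<^sup>*" "x \<in> S" "\<forall>a b. (a, b) \<in> R \<longrightarrow> a \<in> S \<longrightarrow> b \<in> S"
  shows "y \<in> S"
  using assms by (induction rule: rtrancl_induct) auto

lemma P3_hypergraph: "hypergraph 3 P3"
  unfolding hypergraph_def P3_def inj_on_def by (auto simp: doubleton_eq_iff)

lemma lt3: "(u::nat) < 3 \<longleftrightarrow> u = 0 \<or> u = 1 \<or> u = 2" by auto

lemma P3_join_tree: "join_tree 3 P3 E3"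
proof -
  have r: "(0,1) \<in> E3\<^sup>*" "(1,0) \<in> E3\<^sup>*" "(1,2) \<in> E3\<^sup>*" "(2,1) \<in> E3\<^sup>*"
    by (auto simp: E3_def)
  have r2: "(0,2) \<in> E3\<^sup>*" "(2,0) \<in> E3\<^sup>*" using r by (meson rtrancl_trans)+
  have EI: "E3 \<inter> {..<3} \<times> {..<3} = E3" by (auto simp: E3_def)
  have conn: "connected_on {..<3} E3"
    unfolding connected_on_def EI
  proof (intro ballI)
    fix u v :: nat assume "u \<in> {..<3}" "v \<in> {..<3}"
    then have "u = 0 \<or> u = 1 \<or> u = 2" "v = 0 \<or> v = 1 \<or> v = 2" by auto
    then show "(u, v) \<in> E3\<^sup>*" using r r2 by (elim disjE) simp_all
  qed
  have br: "\<forall>u v. (u, v) \<in> E3 \<longrightarrow> (u, v) \<notin> (E3 - {(u, v), (v, u)})\<^sup>*"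
  proof (intro allI impI notI)
    fix u v assume uv: "(u, v) \<in> E3" and p: "(u, v) \<in> (E3 - {(u, v), (v, u)})\<^sup>*"
    from uv have "(u = 0 \<and> v = 1) \<or> (u = 1 \<and> v = 0) \<or> (u = 1 \<and> v = 2) \<or> (u = 2 \<and> v = 1)"
      by (auto simp: E3_def)
    then show False
    proof (elim disjE conjE)
      assume "u = 0" "v = 1"
      then have "v \<in> {0}" using p by (intro reach_closed[OF p]) (auto simp: E3_def)
      then show False using \<open>v = 1\<close> by simp
    next
      assume "u = 1" "v = 0"
      then have "v \<in> {1,2}" using p by (intro reach_closed[OF p]) (auto simp: E3_def)
      then show False using \<open>v = 0\<close> by simp
    next
      assume "u = 1" "v = 2"
      then have "v \<in> {0,1}" using p by (intro reach_closed[OF p]) (auto simp: E3_def)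
      then show False using \<open>v = 2\<close> by simp
    next
      assume "u = 2" "v = 1"
      then have "v \<in> {2}" using p by (intro reach_closed[OF p]) (auto simp: E3_def)
      then show False using \<open>v = 1\<close> by simp
    qed
  qed
  have s1: "sym E3" by (auto simp: E3_def sym_def)
  have s2: "\<forall>v. (v,v) \<notin> E3" by (auto simp: E3_def)
  have s3: "E3 \<subseteq> {..<3} \<times> {..<3}" by (auto simp: E3_def)
  have s4: "{..<3::nat} \<noteq> {}" using lessThan_iff[of 0 "3::nat"] by (metis empty_iff zero_less_numeral)
  have tree: "is_tree {..<3} E3"
    unfolding is_tree_def using conn br s1 s2 s3 s4 by blast
  have run: "connected_on {i. i < 3 \<and> v \<in> P3 i} E3" for v
    unfolding connected_on_def
  proof (intro ballI)
    fix u w assume u: "u \<in> {i. i < 3 \<and> v \<in> P3 i}" and w: "w \<in> {i. i < 3 \<and> v \<in> P3 i}"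
    let ?S = "{i. i < 3 \<and> v \<in> P3 i}"
    show "(u, w) \<in> (E3 \<inter> ?S \<times> ?S)\<^sup>*"
    proof (cases "u = w")
      case True then show ?thesis by simp
    next
      case False
      have "(u, w) \<in> E3" using u w False by (auto simp: P3_def E3_def lt3)
      then have "(u, w) \<in> E3 \<inter> ?S \<times> ?S" using u w by blast
      then show ?thesis by blast
    qed
  qed
  show ?thesis unfolding join_tree_def using tree run by blast
qed

lemma P3_acyclic: "acyclic_hypergraph 3 P3"
  unfolding acyclic_hypergraph_def using P3_join_tree by blast


lemma P3_vals: "P3 0 = {0,1}" "P3 1 = {1,2}" "P3 2 = {2,3}"
  by (simp_all add: P3_def numeral_2_eq_2 numeral_3_eq_3)

lemma mk_inj_at: "inj_on f I \<Longrightarrow> k \<in> I \<Longrightarrow> mk I f g (f k) = g k"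
proof -
  assume "inj_on f I" "k \<in> I"
  then have e: "{k' \<in> I. f k' = f k} = {k}" unfolding inj_on_def by blast
  show ?thesis unfolding mk_def e by simp
qed

lemma mk_none: "(\<And>k. k \<in> I \<Longrightarrow> f k \<noteq> t) \<Longrightarrow> mk I f g t = 0"
proof -
  assume "\<And>k. k \<in> I \<Longrightarrow> f k \<noteq> t"
  then have e: "{k \<in> I. f k = t} = {}" by blast
  show ?thesis unfolding mk_def e by simp
qed

lemma marg_zero_pos:
  assumes pos: "\<forall>p q :: 'k::comm_monoid_add. p + q = 0 \<longrightarrow> p = 0 \<and> q = 0"
    and fin: "finite (support W)" and z: "marg W Y t = 0" and w: "w |` Y = t"
  shows "W w = (0::'k)"
proof (rule ccontr)
  assume nz: "W w \<noteq> 0"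
  then have "w \<in> {r \<in> support W. r |` Y = t}" using w unfolding support_def by simp
  moreover have "sum W {r \<in> support W. r |` Y = t} = 0" using z unfolding marg_def .
  ultimately have "W w = 0" using sum_zero_pos[OF pos] fin by (metis (no_types, lifting) finite_subset mem_Collect_eq subsetI)
  then show False using nz by simp
qed

lemma marg_param:
  assumes fin: "finite K" and inj: "inj_on h K" and hY: "\<And>k. k \<in> K \<Longrightarrow> h k |` Y = t"
    and cov: "\<And>w. W w \<noteq> 0 \<Longrightarrow> w |` Y = t \<Longrightarrow> w \<in> h ` K"
  shows "marg W Y t = (\<Sum>k\<in>K. W (h k))"
proof -
  have "marg W Y t = sum W {w \<in> support W. w |` Y = t}" unfolding marg_def ..
  also have "\<dots> = sum W (h ` K)"
    apply (rule sum.mono_neutral_left)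
    using fin cov hY by (auto simp: support_def)
  also have "\<dots> = (\<Sum>k\<in>K. W (h k))" using sum.reindex[OF inj] by simp
  finally show ?thesis .
qed

lemma tuple4:
  assumes "is_tuple Dom {0,1,2,3} w"
  shows "w = [0 \<mapsto> the (w 0), 1 \<mapsto> the (w 1), 2 \<mapsto> the (w 2), 3 \<mapsto> the (w 3)]"
proof
  fix x
  have d: "dom w = {0,1,2,3}" using assms unfolding is_tuple_def by simp
  show "w x = [0 \<mapsto> the (w 0), 1 \<mapsto> the (w 1), 2 \<mapsto> the (w 2), 3 \<mapsto> the (w 3)] x"
  proof (cases "x \<in> {0,1,2,3}")
    case True
    then have "w x \<noteq> None" using d by blast
    then show ?thesis using True by auto
  next
    case False
    then have "w x = None" using d by blast
    then show ?thesis using False by auto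
  qed
qed

definition qf1 :: "nat + nat \<Rightarrow> tuple" where
  "qf1 = case_sum (\<lambda>i. [0 \<mapsto> i, 1 \<mapsto> 0]) (\<lambda>j. [0 \<mapsto> j, 1 \<mapsto> 1])"
definition qf2 :: "nat + nat \<Rightarrow> tuple" where
  "qf2 = case_sum (\<lambda>i. [1 \<mapsto> 0, 2 \<mapsto> 0]) (\<lambda>j. [1 \<mapsto> 1, 2 \<mapsto> 1])"
definition qf2' :: "nat + nat \<Rightarrow> tuple" where
  "qf2' = case_sum (\<lambda>i. [1 \<mapsto> 1, 2 \<mapsto> 1]) (\<lambda>j. [1 \<mapsto> 0, 2 \<mapsto> 0])"
definition qf3 :: "nat + nat \<Rightarrow> tuple" where
  "qf3 = case_sum (\<lambda>i. [2 \<mapsto> 1, 3 \<mapsto> i]) (\<lambda>j. [2 \<mapsto> 0, 3 \<mapsto> j])"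
definition qf12 :: "nat + nat \<Rightarrow> tuple" where
  "qf12 = case_sum (\<lambda>i. [0 \<mapsto> i, 1 \<mapsto> 0, 2 \<mapsto> 0]) (\<lambda>j. [0 \<mapsto> j, 1 \<mapsto> 1, 2 \<mapsto> 1])"
definition qf23 :: "nat + nat \<Rightarrow> tuple" where
  "qf23 = case_sum (\<lambda>i. [1 \<mapsto> 1, 2 \<mapsto> 1, 3 \<mapsto> i]) (\<lambda>j. [1 \<mapsto> 0, 2 \<mapsto> 0, 3 \<mapsto> j])"
definition qf13 :: "nat + nat \<Rightarrow> tuple" where
  "qf13 = case_sum (\<lambda>i. [0 \<mapsto> i, 1 \<mapsto> 0, 2 \<mapsto> 1, 3 \<mapsto> i]) (\<lambda>j. [0 \<mapsto> j, 1 \<mapsto> 1, 2 \<mapsto> 0, 3 \<mapsto> j])"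

lemma restr_calc:
  "qf12 k |` {0,1} = qf1 k" "qf12 k |` {1,2} = qf2 k"
  "qf23 k |` {1,2} = qf2' k" "qf23 k |` {2,3} = qf3 k"
  "qf13 k |` {0,1} = qf1 k" "qf13 k |` {2,3} = qf3 k"
  by (cases k; auto simp: qf1_def qf2_def qf2'_def qf3_def qf12_def qf23_def qf13_def restrict_map_def fun_eq_iff)+

lemma tuple_calc:
  "is_tuple Dom' {0,1} (qf1 k)" "is_tuple Dom' {1,2} (qf2 k)" "is_tuple Dom' {2,3} (qf3 k)"
  "is_tuple Dom' ({0,1} \<union> {1,2}) (qf12 k)" "is_tuple Dom' ({1,2} \<union> {2,3}) (qf23 k)"
  "is_tuple Dom' ({0,1} \<union> {2,3}) (qf13 k)"
  if "Dom' = (\<lambda>_. UNIV)"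
  using that by (cases k; auto simp: qf1_def qf2_def qf3_def qf12_def qf23_def qf13_def is_tuple_def)+

lemma inj_qf1: "inj qf1"
proof (rule injI)
  fix k k' assume eq: "qf1 k = qf1 k'"
  show "k = k'" using fun_cong[OF eq, of 0] fun_cong[OF eq, of 1]
    by (cases k; cases k') (auto simp: qf1_def)
qed

lemma inj_qf3: "inj qf3"
proof (rule injI)
  fix k k' assume eq: "qf3 k = qf3 k'"
  show "k = k'" using fun_cong[OF eq, of 2] fun_cong[OF eq, of 3]
    by (cases k; cases k') (auto simp: qf3_def)
qed


lemma tp_from_P3:
  assumes pos: "\<forall>p q :: 'k::comm_monoid_add. p + q = 0 \<longrightarrow> p = 0 \<and> q = 0"
    and L: "local_to_global TYPE('k) 3 P3"
  shows "transportation_property TYPE('k)"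
  unfolding transportation_property_def
proof (intro allI impI)
  fix m n :: nat and b c :: "nat \<Rightarrow> 'k"
  assume h: "0 < m \<and> 0 < n \<and> (\<Sum>i<m. b i) = (\<Sum>j<n. c j)"
  then have bc: "(\<Sum>i<m. b i) = (\<Sum>j<n. c j)" by simp
  define I where "I = {..<m} <+> {..<n}"
  define g where "g = case_sum b c"
  define Dom :: "nat \<Rightarrow> nat set" where "Dom = (\<lambda>_. UNIV)"
  define R1 where "R1 = mk I qf1 g"
  define R2 where "R2 = mk I qf2 g"
  define R3 where "R3 = mk I qf3 g"
  define RR where "RR = (\<lambda>k::nat. if k = 0 then R1 else if k = 1 then R2 else R3)"
  have fI: "finite I" unfolding I_def by simp
  note tc = tuple_calc[OF Dom_def]
  have k1: "is_krel Dom {0,1} R1" unfolding R1_def by (rule is_krel_mk[OF fI tc(1)])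
  have k2: "is_krel Dom {1,2} R2" unfolding R2_def by (rule is_krel_mk[OF fI tc(2)])
  have k3: "is_krel Dom {2,3} R3" unfolding R3_def by (rule is_krel_mk[OF fI tc(3)])
  have R2': "mk I qf2' g = R2"
  proof
    fix t
    have split: "mk I f g t = (\<Sum>i<m. if f (Inl i) = t then b i else 0) + (\<Sum>j<n. if f (Inr j) = t then c j else 0)" for f
    proof -
      have "mk I f g t = (\<Sum>k\<in>I. if f k = t then g k else 0)"
        unfolding mk_def by (rule sum.inter_filter[OF fI])
      also have "\<dots> = (\<Sum>i<m. if f (Inl i) = t then b i else 0) + (\<Sum>j<n. if f (Inr j) = t then c j else 0)"
        unfolding I_def g_def by (subst sum.Plus) (auto simp: comp_def cong: if_cong)
      finally show ?thesis .
    qed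
    define T00 :: tuple where "T00 = [1 \<mapsto> 0, 2 \<mapsto> 0]"
    define T11 :: tuple where "T11 = [1 \<mapsto> 1, 2 \<mapsto> 1]"
    have ne: "T00 \<noteq> T11"
    proof
      assume "T00 = T11"
      then have "T00 1 = T11 1" by simp
      then show False unfolding T00_def T11_def by simp
    qed
    have q2: "qf2 (Inl i) = T00" "qf2 (Inr j) = T11" "qf2' (Inl i) = T11" "qf2' (Inr j) = T00" for i j
      unfolding qf2_def qf2'_def T00_def T11_def by simp_all
    show "mk I qf2' g t = R2 t"
      unfolding R2_def split q2
      using ne bc by (cases "t = T00"; cases "t = T11") auto
  qed
  have c12: "consistent Dom R1 {0,1} R2 {1,2}"
    unfolding consistent_def
  proof (intro exI conjI)
    show "is_krel Dom ({0,1} \<union> {1,2}) (mk I qf12 g)" by (rule is_krel_mk[OF fI tc(4)])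
    show "marg (mk I qf12 g) {0,1} = R1" unfolding marg_mk[OF fI] restr_calc R1_def ..
    show "marg (mk I qf12 g) {1,2} = R2" unfolding marg_mk[OF fI] restr_calc R2_def ..
  qed
  have c23: "consistent Dom R2 {1,2} R3 {2,3}"
    unfolding consistent_def
  proof (intro exI conjI)
    show "is_krel Dom ({1,2} \<union> {2,3}) (mk I qf23 g)" by (rule is_krel_mk[OF fI tc(5)])
    show "marg (mk I qf23 g) {1,2} = R2" unfolding marg_mk[OF fI] restr_calc R2' ..
    show "marg (mk I qf23 g) {2,3} = R3" unfolding marg_mk[OF fI] restr_calc R3_def ..
  qed
  have c13: "consistent Dom R1 {0,1} R3 {2,3}"
    unfolding consistent_def
  proof (intro exI conjI)
    show "is_krel Dom ({0,1} \<union> {2,3}) (mk I qf13 g)" by (rule is_krel_mk[OF fI tc(6)])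
    show "marg (mk I qf13 g) {0,1} = R1" unfolding marg_mk[OF fI] restr_calc R1_def ..
    show "marg (mk I qf13 g) {2,3} = R3" unfolding marg_mk[OF fI] restr_calc R3_def ..
  qed
  have lt3: "{..<3::nat} = {0,1,2}" by auto
  have RR0: "RR 0 = R1" "RR 1 = R2" "RR 2 = R3" by (simp_all add: RR_def)
  have kr: "\<forall>i<3. is_krel Dom (P3 i) (RR i)"
  proof (intro allI impI)
    fix i :: nat assume "i < 3"
    then have "i = 0 \<or> i = 1 \<or> i = 2" by auto
    then show "is_krel Dom (P3 i) (RR i)"
      by (elim disjE; simp only: RR0 P3_vals k1 k2 k3)
  qed
  have cs: "\<forall>i<3. \<forall>j<3. consistent Dom (RR i) (P3 i) (RR j) (P3 j)"
  proof (intro allI impI)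
    fix i j :: nat assume "i < 3" "j < 3"
    then have "i = 0 \<or> i = 1 \<or> i = 2" "j = 0 \<or> j = 1 \<or> j = 2" by auto
    then show "consistent Dom (RR i) (P3 i) (RR j) (P3 j)"
      using c12 c23 c13 consistent_sym[OF c12] consistent_sym[OF c23] consistent_sym[OF c13]
        consistent_self[OF k1] consistent_self[OF k2] consistent_self[OF k3]
      by (elim disjE; simp only: RR0 P3_vals)
  qed
  obtain W where W: "is_krel Dom (\<Union>i<3. P3 i) W" "\<forall>i<3. marg W (P3 i) = RR i"
    using L kr cs unfolding local_to_global_def by blast
  have U: "(\<Union>i<3. P3 i) = {0,1,2,3}" unfolding lt3 by (auto simp: P3_def)
  have kW: "is_krel Dom {0,1,2,3} W" using W(1) U by simp
  have fW: "finite (support W)" using finite_support[OF kW] .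
  have m1: "marg W {0,1} = R1" using W(2)[rule_format, of 0] unfolding P3_vals RR0 by simp
  have m2: "marg W {1,2} = R2" using W(2)[rule_format, of 1] unfolding P3_vals RR0 by simp
  have m3: "marg W {2,3} = R3" using W(2)[rule_format, of 2] unfolding P3_vals RR0 by simp
  have tW: "w = [0 \<mapsto> the (w 0), 1 \<mapsto> the (w 1), 2 \<mapsto> the (w 2), 3 \<mapsto> the (w 3)]" if "W w \<noteq> 0" for w
    using tuple4[of Dom w] kW that unfolding is_krel_def by blast
  define T4 :: "nat \<Rightarrow> nat \<Rightarrow> nat \<Rightarrow> nat \<Rightarrow> tuple" where
    "T4 a1 a2 a3 a4 = [0 \<mapsto> a1, 1 \<mapsto> a2, 2 \<mapsto> a3, 3 \<mapsto> a4]" for a1 a2 a3 a4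
  define d where "d = (\<lambda>i j. W (T4 i 0 0 j))"
  have zero: "W w = 0" if "w |` Y = t" "marg W Y t = 0" for w Y t
    using marg_zero_pos[OF pos fW that(2) that(1)] .
  show "\<exists>d. (\<forall>i<m. (\<Sum>j<n. d i j) = b i) \<and> (\<forall>j<n. (\<Sum>i<m. d i j) = c j)"
  proof (rule exI[of _ d], intro conjI allI impI)
    fix i assume i: "i < m"
    have row: "marg W {0,1} [0 \<mapsto> i, 1 \<mapsto> 0] = (\<Sum>j<n. W (T4 i 0 0 j))"
    proof (rule marg_param)
      show "inj_on (T4 i 0 0) {..<n}"
      proof (rule inj_onI)
        fix x y assume "T4 i 0 0 x = T4 i 0 0 y"
        then have "T4 i 0 0 x 3 = T4 i 0 0 y 3" by simp
        then show "x = y" unfolding T4_def by simp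
      qed
      show "T4 i 0 0 j |` {0,1} = [0 \<mapsto> i, 1 \<mapsto> 0]" for j
        unfolding T4_def by (auto simp: restrict_map_def fun_eq_iff)
      fix w assume nz: "W w \<noteq> 0" and r: "w |` {0,1} = [0 \<mapsto> i, 1 \<mapsto> 0]"
      have w0: "w 0 = Some i" using fun_cong[OF r, of 0] by simp
      have w1: "w 1 = Some 0" using fun_cong[OF r, of 1] by simp
      define a2 where "a2 = the (w 2)"
      define a3 where "a3 = the (w 3)"
      have wT: "w = T4 i 0 a2 a3" using tW[OF nz] w0 w1 unfolding T4_def a2_def a3_def by simp
      have "a2 = 0"
      proof (rule ccontr)
        assume a2: "a2 \<noteq> 0"
        have "R2 [1 \<mapsto> 0, 2 \<mapsto> a2] = 0" unfolding R2_def
        proof (rule mk_none)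
          fix k assume "k \<in> I"
          show "qf2 k \<noteq> [1 \<mapsto> 0, 2 \<mapsto> a2]"
          proof
            assume eq: "qf2 k = [1 \<mapsto> 0, 2 \<mapsto> a2]"
            show False using fun_cong[OF eq, of 1] fun_cong[OF eq, of 2] a2
              by (cases k) (auto simp: qf2_def)
          qed
        qed
        moreover have "w |` {1,2} = [1 \<mapsto> 0, 2 \<mapsto> a2]"
          unfolding wT T4_def by (auto simp: restrict_map_def fun_eq_iff)
        ultimately have "W w = 0" using zero m2 by metis
        then show False using nz by simp
      qed
      moreover have "a3 < n"
      proof (rule ccontr)
        assume a3: "\<not> a3 < n"
        have "R3 [2 \<mapsto> 0, 3 \<mapsto> a3] = 0" unfolding R3_def
        proof (rule mk_none)
          fix k assume k: "k \<in> I"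
          show "qf3 k \<noteq> [2 \<mapsto> 0, 3 \<mapsto> a3]"
          proof
            assume eq: "qf3 k = [2 \<mapsto> 0, 3 \<mapsto> a3]"
            show False using fun_cong[OF eq, of 2] fun_cong[OF eq, of 3] a3 k
              by (cases k) (auto simp: qf3_def I_def)
          qed
        qed
        moreover have "w |` {2,3} = [2 \<mapsto> 0, 3 \<mapsto> a3]"
          unfolding wT T4_def using \<open>a2 = 0\<close> by (auto simp: restrict_map_def fun_eq_iff)
        ultimately have "W w = 0" using zero m3 by metis
        then show False using nz by simp
      qed
      ultimately show "w \<in> T4 i 0 0 ` {..<n}" using wT by blast
    qed simp
    have rv: "marg W {0,1} [0 \<mapsto> i, 1 \<mapsto> 0] = b i"
    proof -
      have e: "[0 \<mapsto> i, 1 \<mapsto> 0] = qf1 (Inl i)" by (simp add: qf1_def)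
      have "Inl i \<in> I" using i unfolding I_def by (simp add: InlI)
      then have mi: "mk I qf1 g (qf1 (Inl i)) = g (Inl i)" by (rule mk_inj_at[OF inj_on_subset[OF inj_qf1 subset_UNIV]])
      have gi: "g (Inl i) = b i" by (simp add: g_def)
      show ?thesis by (simp only: m1 e R1_def mi gi)
    qed
    show "(\<Sum>j<n. d i j) = b i" using row rv unfolding d_def by simp
  next
    fix j assume j: "j < n"
    have row: "marg W {2,3} [2 \<mapsto> 0, 3 \<mapsto> j] = (\<Sum>i<m. W (T4 i 0 0 j))"
    proof (rule marg_param)
      show "inj_on (\<lambda>i. T4 i 0 0 j) {..<m}"
      proof (rule inj_onI)
        fix x y assume "T4 x 0 0 j = T4 y 0 0 j"
        then have "T4 x 0 0 j 0 = T4 y 0 0 j 0" by simp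
        then show "x = y" unfolding T4_def by simp
      qed
      show "T4 i 0 0 j |` {2,3} = [2 \<mapsto> 0, 3 \<mapsto> j]" for i
        unfolding T4_def by (auto simp: restrict_map_def fun_eq_iff)
      fix w assume nz: "W w \<noteq> 0" and r: "w |` {2,3} = [2 \<mapsto> 0, 3 \<mapsto> j]"
      have w2: "w 2 = Some 0" using fun_cong[OF r, of 2] by simp
      have w3: "w 3 = Some j" using fun_cong[OF r, of 3] by simp
      define a0 where "a0 = the (w 0)"
      define a1 where "a1 = the (w 1)"
      have wT: "w = T4 a0 a1 0 j" using tW[OF nz] w2 w3 unfolding T4_def a0_def a1_def by simp
      have "a1 = 0"
      proof (rule ccontr)
        assume a1: "a1 \<noteq> 0"
        have "R2 [1 \<mapsto> a1, 2 \<mapsto> 0] = 0" unfolding R2_def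
        proof (rule mk_none)
          fix k assume "k \<in> I"
          show "qf2 k \<noteq> [1 \<mapsto> a1, 2 \<mapsto> 0]"
          proof
            assume eq: "qf2 k = [1 \<mapsto> a1, 2 \<mapsto> 0]"
            show False using fun_cong[OF eq, of 1] fun_cong[OF eq, of 2] a1
              by (cases k) (auto simp: qf2_def)
          qed
        qed
        moreover have "w |` {1,2} = [1 \<mapsto> a1, 2 \<mapsto> 0]"
          unfolding wT T4_def by (auto simp: restrict_map_def fun_eq_iff)
        ultimately have "W w = 0" using zero m2 by metis
        then show False using nz by simp
      qed
      moreover have "a0 < m"
      proof (rule ccontr)
        assume a0: "\<not> a0 < m"
        have "R1 [0 \<mapsto> a0, 1 \<mapsto> 0] = 0" unfolding R1_def
        proof (rule mk_none)
          fix k assume k: "k \<in> I"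
          show "qf1 k \<noteq> [0 \<mapsto> a0, 1 \<mapsto> 0]"
          proof
            assume eq: "qf1 k = [0 \<mapsto> a0, 1 \<mapsto> 0]"
            show False using fun_cong[OF eq, of 0] fun_cong[OF eq, of 1] a0 k
              by (cases k) (auto simp: qf1_def I_def)
          qed
        qed
        moreover have "w |` {0,1} = [0 \<mapsto> a0, 1 \<mapsto> 0]"
          unfolding wT T4_def using \<open>a1 = 0\<close> by (auto simp: restrict_map_def fun_eq_iff)
        ultimately have "W w = 0" using zero m1 by metis
        then show False using nz by simp
      qed
      ultimately show "w \<in> (\<lambda>i. T4 i 0 0 j) ` {..<m}" using wT by blast
    qed simp
    have rv: "marg W {2,3} [2 \<mapsto> 0, 3 \<mapsto> j] = c j"
    proof -
      have e: "[2 \<mapsto> 0, 3 \<mapsto> j] = qf3 (Inr j)" by (simp add: qf3_def)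
      have "Inr j \<in> I" using j unfolding I_def by (simp add: InrI)
      then have mi: "mk I qf3 g (qf3 (Inr j)) = g (Inr j)" by (rule mk_inj_at[OF inj_on_subset[OF inj_qf3 subset_UNIV]])
      have gi: "g (Inr j) = c j" by (simp add: g_def)
      show ?thesis by (simp only: m3 e R3_def mi gi)
    qed
    show "(\<Sum>i<m. d i j) = c j" using row rv unfolding d_def by simp
  qed
qed


theorem theorem17:
  assumes positive: "\<forall>p q :: 'k::comm_monoid_add. p + q = 0 \<longrightarrow> p = 0 \<and> q = 0"
    and nontrivial: "\<exists>x :: 'k. x \<noteq> 0"
  shows "(transportation_property TYPE('k) \<longleftrightarrow> inner_consistency_property TYPE('k))
       \<and> (inner_consistency_property TYPE('k) \<longleftrightarrow>
            (\<forall>m X. hypergraph m X \<and> acyclic_hypergraph m X \<longrightarrow> local_to_global TYPE('k) m X))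
       \<and> ((\<forall>m X. hypergraph m X \<and> acyclic_hypergraph m X \<longrightarrow> local_to_global TYPE('k) m X)
            \<longleftrightarrow> local_to_global TYPE('k) 3 P3)"
proof -
  have TI: "transportation_property TYPE('k) \<Longrightarrow> inner_consistency_property TYPE('k)"
    using tp_icp positive by blast
  have IL: "\<forall>m X. hypergraph m X \<and> acyclic_hypergraph m X \<longrightarrow> local_to_global TYPE('k) m X"
    if icp: "inner_consistency_property TYPE('k)"
  proof (intro allI impI)
    fix m X assume h: "hypergraph m X \<and> acyclic_hypergraph m X"
    then obtain E where jt: "join_tree m X E" unfolding acyclic_hypergraph_def by blast
    have tr: "is_tree {..<m} E" and run0: "\<forall>v. connected_on {i. i < m \<and> v \<in> X i} E"
      using jt unfolding join_tree_def by auto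
    have ne: "{..<m} \<noteq> {}" and sub: "E \<subseteq> {..<m} \<times> {..<m}" and sy: "sym E"
      and irr: "\<forall>v. (v, v) \<notin> E" and conn: "connected_on {..<m} E"
      and br: "\<forall>u v. (u, v) \<in> E \<longrightarrow> (u, v) \<notin> (E - {(u, v), (v, u)})\<^sup>*"
      using tr unfolding is_tree_def by auto
    have eqS: "{i \<in> {..<m}. v \<in> X i} = {i. i < m \<and> v \<in> X i}" for v by auto
    have run: "\<forall>v. connected_on {i \<in> {..<m}. v \<in> X i} E" unfolding eqS using run0 .
    have finX: "\<forall>i<m. finite (X i)" using h unfolding hypergraph_def by blast
    show "local_to_global TYPE('k) m X"
      unfolding local_to_global_def
    proof (intro allI impI)
      fix Dom and R :: "nat \<Rightarrow> 'k krelation"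
      assume a: "(\<forall>i<m. is_krel Dom (X i) (R i)) \<and> (\<forall>i<m. \<forall>j<m. consistent Dom (R i) (X i) (R j) (X j))"
      have kr: "\<forall>i\<in>{..<m}. finite (X i) \<and> is_krel Dom (X i) (R i)" using a finX by auto
      have cs: "\<forall>i\<in>{..<m}. \<forall>j\<in>{..<m}. consistent Dom (R i) (X i) (R j) (X j)" using a by auto
      obtain W where W: "is_krel Dom (\<Union>i\<in>{..<m}. X i) W" "\<forall>i\<in>{..<m}. marg W (X i) = R i"
        using glue[OF icp, of "{..<m}" E X Dom R] finite_lessThan ne sub sy irr conn br run kr cs
        by blast
      show "\<exists>W. is_krel Dom (\<Union>i<m. X i) W \<and> (\<forall>i<m. marg W (X i) = R i)"
        using W by auto
    qed
  qed
  have LP: "local_to_global TYPE('k) 3 P3"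
    if "\<forall>m X. hypergraph m X \<and> acyclic_hypergraph m X \<longrightarrow> local_to_global TYPE('k) m X"
    using that P3_hypergraph P3_acyclic by blast
  have PT: "local_to_global TYPE('k) 3 P3 \<Longrightarrow> transportation_property TYPE('k)"
    using tp_from_P3 positive by blast
  show ?thesis using TI IL LP PT by blast
qed

end
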